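(* The interior (in $\mathfrak a$) of the closure $\overline{\mathfrak a^+_{\mathfrak u}}$ is $\mathfrak a^+_{\mathfrak u}$.
   Context: $\mathfrak h$ is the Lie algebra of a connected semisimple real Lie group $H$ without compact factors; $P$ an absolutely proper parabolic subgroup of $H$ (projection to each simple factor not surjective), $\mathfrak u$ the Lie algebra of its unipotent radical, $\mathfrak a$ the Lie algebra of a maximal connected $\operatorname{Ad}$-diagonalizable subgroup of $P$. $\Phi(\mathfrak u)\subset\mathfrak a^*$ is the set of roots of $\mathfrak a$ on $\mathfrak u$; for $\alpha\in\mathfrak a^*$, $s_\alpha\in\mathfrak a$ satisfies $\mathbf B(s_\alpha,s)=\alpha(s)$ for all $s\in\mathfrak a$, $\mathbf B$ the Killing form; $\mathfrak a^+_{\mathfrak u}=\{\sum_{\alpha\in\Phi(\mathfrak u)}t_\alpha s_\alpha:t_\alpha>0 \text{ for all } \alpha\}$. *)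

theory Defs
  imports "HOL-Analysis.Analysis"
begin

text \<open>A finite-dimensional real Lie algebra is modelled as a Euclidean space type
  (the Euclidean structure is only used as a finite-dimensional topology/basis)
  together with a bracket \<open>br\<close>.\<close>

definition lie_algebra :: "('a::euclidean_space \<Rightarrow> 'a \<Rightarrow> 'a) \<Rightarrow> bool" where
  "lie_algebra br \<longleftrightarrow> bilinear br \<and> (\<forall>x. br x x = 0) \<and>
     (\<forall>x y z. br x (br y z) + br y (br z x) + br z (br x y) = 0)"

definition ltrace :: "('a::euclidean_space \<Rightarrow> 'a) \<Rightarrow> real" where
  "ltrace f = (\<Sum>b\<in>Basis. f b \<bullet> b)"

definition killing :: "('a::euclidean_space \<Rightarrow> 'a \<Rightarrow> 'a) \<Rightarrow> 'a \<Rightarrow> 'a \<Rightarrow> real" where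
  "killing br x y = ltrace (br x \<circ> br y)"

definition semisimple :: "('a::euclidean_space \<Rightarrow> 'a \<Rightarrow> 'a) \<Rightarrow> bool" where
  "semisimple br \<longleftrightarrow> lie_algebra br \<and> (\<forall>x. (\<forall>y. killing br x y = 0) \<longrightarrow> x = 0)"

definition lie_subalgebra :: "('a::euclidean_space \<Rightarrow> 'a \<Rightarrow> 'a) \<Rightarrow> 'a set \<Rightarrow> bool" where
  "lie_subalgebra br S \<longleftrightarrow> subspace S \<and> (\<forall>x\<in>S. \<forall>y\<in>S. br x y \<in> S)"

definition lie_ideal :: "('a::euclidean_space \<Rightarrow> 'a \<Rightarrow> 'a) \<Rightarrow> 'a set \<Rightarrow> bool" where
  "lie_ideal br I \<longleftrightarrow> subspace I \<and> (\<forall>x. \<forall>y\<in>I. br x y \<in> I)"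

text \<open>Simple factors of a semisimple Lie algebra = its minimal nonzero ideals.\<close>
definition simple_factor :: "('a::euclidean_space \<Rightarrow> 'a \<Rightarrow> 'a) \<Rightarrow> 'a set \<Rightarrow> bool" where
  "simple_factor br I \<longleftrightarrow> lie_ideal br I \<and> I \<noteq> {0} \<and>
     (\<forall>J. lie_ideal br J \<and> J \<subseteq> I \<longrightarrow> J = {0} \<or> J = I)"

text \<open>A simple factor is compact iff the Killing form is negative definite on it.\<close>
definition compact_factor :: "('a::euclidean_space \<Rightarrow> 'a \<Rightarrow> 'a) \<Rightarrow> 'a set \<Rightarrow> bool" where
  "compact_factor br I \<longleftrightarrow> simple_factor br I \<and> (\<forall>x\<in>I. x \<noteq> 0 \<longrightarrow> killing br x x < 0)"

definition no_compact_factors :: "('a::euclidean_space \<Rightarrow> 'a \<Rightarrow> 'a) \<Rightarrow> bool" where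
  "no_compact_factors br \<longleftrightarrow> (\<forall>I. \<not> compact_factor br I)"

definition real_diagonalizable :: "('a::euclidean_space \<Rightarrow> 'a) \<Rightarrow> bool" where
  "real_diagonalizable f \<longleftrightarrow> span {v. \<exists>c. f v = c *\<^sub>R v} = UNIV"

text \<open>Lie algebras of parabolic subgroups: \<open>p = \<Sum>\<^sub>c\<^sub>\<ge>\<^sub>0 ker(ad X - c)\<close> for some
  element \<open>X\<close> with \<open>ad X\<close> real diagonalizable.\<close>
definition parabolic_subalgebra :: "('a::euclidean_space \<Rightarrow> 'a \<Rightarrow> 'a) \<Rightarrow> 'a set \<Rightarrow> bool" where
  "parabolic_subalgebra br p \<longleftrightarrow>
     (\<exists>X. real_diagonalizable (br X) \<and> p = span {v. \<exists>c\<ge>0. br X v = c *\<^sub>R v})"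

definition killing_perp :: "('a::euclidean_space \<Rightarrow> 'a \<Rightarrow> 'a) \<Rightarrow> 'a set \<Rightarrow> 'a set" where
  "killing_perp br I = {z. \<forall>w\<in>I. killing br z w = 0}"

text \<open>The projection of \<open>p\<close> to the simple factor \<open>I\<close> (along the sum of the other
  simple factors, i.e. along the Killing-orthogonal complement of \<open>I\<close>) is onto \<open>I\<close>.\<close>
definition projection_onto :: "('a::euclidean_space \<Rightarrow> 'a \<Rightarrow> 'a) \<Rightarrow> 'a set \<Rightarrow> 'a set \<Rightarrow> bool" where
  "projection_onto br p I \<longleftrightarrow> (\<forall>y\<in>I. \<exists>x\<in>p. x - y \<in> killing_perp br I)"

definition absolutely_proper :: "('a::euclidean_space \<Rightarrow> 'a \<Rightarrow> 'a) \<Rightarrow> 'a set \<Rightarrow> bool" where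
  "absolutely_proper br p \<longleftrightarrow> (\<forall>I. simple_factor br I \<longrightarrow> \<not> projection_onto br p I)"

text \<open>Lie algebra of the unipotent radical: largest ideal of \<open>p\<close> consisting of
  ad-nilpotent elements (sum of all such ideals).\<close>
definition unipotent_radical :: "('a::euclidean_space \<Rightarrow> 'a \<Rightarrow> 'a) \<Rightarrow> 'a set \<Rightarrow> 'a set" where
  "unipotent_radical br p = span (\<Union>{J. subspace J \<and> J \<subseteq> p \<and> (\<forall>x\<in>p. \<forall>y\<in>J. br x y \<in> J) \<and>
        (\<forall>y\<in>J. \<exists>n. (br y ^^ n) = (\<lambda>_. 0))})"

text \<open>Lie algebras of connected Ad-diagonalizable subgroups: abelian subalgebras
  all of whose elements are ad-diagonalizable over the reals.\<close>
definition split_toral :: "('a::euclidean_space \<Rightarrow> 'a \<Rightarrow> 'a) \<Rightarrow> 'a set \<Rightarrow> bool" where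
  "split_toral br S \<longleftrightarrow> subspace S \<and> (\<forall>x\<in>S. \<forall>y\<in>S. br x y = 0) \<and>
     (\<forall>x\<in>S. real_diagonalizable (br x))"

definition maximal_split_toral_in :: "('a::euclidean_space \<Rightarrow> 'a \<Rightarrow> 'a) \<Rightarrow> 'a set \<Rightarrow> 'a set \<Rightarrow> bool" where
  "maximal_split_toral_in br p a \<longleftrightarrow> split_toral br a \<and> a \<subseteq> p \<and>
     (\<forall>b. split_toral br b \<and> b \<subseteq> p \<and> a \<subseteq> b \<longrightarrow> b = a)"

text \<open>Roots of \<open>a\<close> on \<open>u\<close>: nonzero linear functionals on \<open>a\<close> (represented as functions
  restricted to \<open>a\<close>) with nonzero weight space in \<open>u\<close>.\<close>
definition roots_on :: "('a::euclidean_space \<Rightarrow> 'a \<Rightarrow> 'a) \<Rightarrow> 'a set \<Rightarrow> 'a set \<Rightarrow> ('a \<Rightarrow> real) set" where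
  "roots_on br a u = {restrict \<alpha> a | \<alpha>. linear \<alpha> \<and> (\<exists>s\<in>a. \<alpha> s \<noteq> 0) \<and>
      (\<exists>v\<in>u. v \<noteq> 0 \<and> (\<forall>s\<in>a. br s v = \<alpha> s *\<^sub>R v))}"

definition dual_vec :: "('a::euclidean_space \<Rightarrow> 'a \<Rightarrow> 'a) \<Rightarrow> 'a set \<Rightarrow> ('a \<Rightarrow> real) \<Rightarrow> 'a" where
  "dual_vec br a \<alpha> = (THE s. s \<in> a \<and> (\<forall>t\<in>a. killing br s t = \<alpha> t))"

definition pos_cone :: "('a::euclidean_space \<Rightarrow> 'a \<Rightarrow> 'a) \<Rightarrow> 'a set \<Rightarrow> 'a set \<Rightarrow> 'a set" where
  "pos_cone br a u = {(\<Sum>\<alpha>\<in>roots_on br a u. t \<alpha> *\<^sub>R dual_vec br a \<alpha>) | t.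
       \<forall>\<alpha>\<in>roots_on br a u. t \<alpha> > 0}"

end

theory Submission
  imports Defs
begin

lemma ltrace_comp_expand:
  fixes f g :: "'a::euclidean_space \<Rightarrow> 'a"
  assumes "linear f"
  shows "ltrace (f \<circ> g) = (\<Sum>b\<in>Basis. \<Sum>c\<in>Basis. (g b \<bullet> c) * (f c \<bullet> b))"
proof -
  have "f (g b) \<bullet> b = (\<Sum>c\<in>Basis. (g b \<bullet> c) * (f c \<bullet> b))" for b
  proof -
    have "f (g b) = f (\<Sum>c\<in>Basis. (g b \<bullet> c) *\<^sub>R c)" by (simp add: euclidean_representation)
    also have "\<dots> = (\<Sum>c\<in>Basis. (g b \<bullet> c) *\<^sub>R f c)"
      using assms by (simp add: linear_sum linear_scale)
    finally show ?thesis by (simp add: inner_sum_left)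
  qed
  then show ?thesis by (simp add: ltrace_def)
qed

lemma ltrace_comp_commute:
  fixes f g :: "'a::euclidean_space \<Rightarrow> 'a"
  assumes "linear f" "linear g"
  shows "ltrace (f \<circ> g) = ltrace (g \<circ> f)"
  unfolding ltrace_comp_expand[OF assms(1)] ltrace_comp_expand[OF assms(2)]
  by (subst sum.swap) (simp add: mult.commute)

lemma ltrace_diff:
  "ltrace (\<lambda>x. f x - g x) = ltrace f - ltrace g"
  by (simp add: ltrace_def inner_diff_left sum_subtractf)

locale lie =
  fixes br :: "'a::euclidean_space \<Rightarrow> 'a \<Rightarrow> 'a"
  assumes la: "lie_algebra br"
begin

lemma bil: "bilinear br" using la by (simp add: lie_algebra_def)
lemma lin2: "linear (br x)" using bil by (simp add: bilinear_def)
lemma lin1: "linear (\<lambda>x. br x y)" using bil by (simp add: bilinear_def)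
lemma alt: "br x x = 0" using la by (simp add: lie_algebra_def)
lemma jac0: "br x (br y z) + br y (br z x) + br z (br x y) = 0" using la by (simp add: lie_algebra_def)

lemma add1: "br (x + y) z = br x z + br y z" using lin1 linear_add by metis
lemma add2: "br z (x + y) = br z x + br z y" using lin2 linear_add by metis
lemma scale1: "br (c *\<^sub>R x) z = c *\<^sub>R br x z" using lin1 linear_scale by metis
lemma scale2: "br z (c *\<^sub>R x) = c *\<^sub>R br z x" using lin2 linear_scale by metis
lemma zero1[simp]: "br 0 z = 0" using lin1 linear_0 by metis
lemma zero2[simp]: "br z 0 = 0" using lin2 linear_0 by metis
lemma diff1: "br (x - y) z = br x z - br y z" using lin1 linear_diff by metis
lemma diff2: "br z (x - y) = br z x - br z y" using lin2 linear_diff by metis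
lemma neg1: "br (- x) z = - br x z" using lin1 linear_neg by metis
lemma neg2: "br z (- x) = - br z x" using lin2 linear_neg by metis

lemma anti: "br x y = - br y x"
proof -
  have "br (x + y) (x + y) = br x x + br x y + br y x + br y y" by (simp add: add1 add2)
  then have "br x y + br y x = 0" by (simp add: alt)
  then show ?thesis by (simp add: eq_neg_iff_add_eq_0)
qed

lemma jac: "br x (br y z) = br (br x y) z + br y (br x z)"
proof -
  have "br x (br y z) + br y (br z x) + br z (br x y) = 0" by (rule jac0)
  moreover have "br y (br z x) = - br y (br x z)" by (metis anti neg2)
  moreover have "br z (br x y) = - br (br x y) z" by (metis anti)
  ultimately show ?thesis by (simp add: algebra_simps eq_neg_iff_add_eq_0)
qed

lemma jac2: "br (br x y) z = br x (br y z) - br y (br x z)"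
  using jac[of x y z] by (simp add: algebra_simps)

lemma killing_alt: "killing br x y = (\<Sum>b\<in>Basis. br x (br y b) \<bullet> b)"
  by (simp add: killing_def ltrace_def)

lemma killing_lin1: "linear (\<lambda>x. killing br x y)"
  by (rule linearI) (simp_all add: killing_alt add1 scale1 inner_add_left sum.distrib scaleR_sum_right sum_distrib_left)

lemma killing_lin2: "linear (\<lambda>y. killing br x y)"
proof (rule linearI)
  fix a b :: 'a and c :: real
  have l: "linear (br x)" by (rule lin2)
  show "killing br x (a + b) = killing br x a + killing br x b"
    by (simp add: killing_alt add1 linear_add[OF l] inner_add_left sum.distrib)
  show "killing br x (c *\<^sub>R a) = c *\<^sub>R killing br x a"
    by (simp add: killing_alt scale1 linear_scale[OF l] sum_distrib_left)
qed

lemma killing_invariant: "killing br (br x y) z = - killing br y (br x z)"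
proof -
  let ?X = "br x" and ?Y = "br y" and ?Z = "br z"
  have lX: "linear ?X" and lY: "linear ?Y" and lZ: "linear ?Z" by (rule lin2)+
  have 1: "killing br (br x y) z = ltrace (?X \<circ> (?Y \<circ> ?Z)) - ltrace (?Y \<circ> ?X \<circ> ?Z)"
  proof -
    have "killing br (br x y) z = ltrace (\<lambda>w. br x (br y (br z w)) - br y (br x (br z w)))"
      unfolding killing_def o_def by (rule arg_cong[where f=ltrace]) (auto simp: jac2[of x y])
    then show ?thesis by (simp add: ltrace_diff o_def)
  qed
  have 2: "killing br y (br x z) = ltrace (?Y \<circ> ?X \<circ> ?Z) - ltrace (?Y \<circ> ?Z \<circ> ?X)"
  proof -
    have "killing br y (br x z) = ltrace (\<lambda>w. br y (br x (br z w)) - br y (br z (br x w)))"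
      unfolding killing_def o_def by (rule arg_cong[where f=ltrace]) (auto simp: jac2[of x z] diff2)
    then show ?thesis by (simp add: ltrace_diff o_def)
  qed
  have "ltrace (?X \<circ> (?Y \<circ> ?Z)) = ltrace ((?Y \<circ> ?Z) \<circ> ?X)"
    by (rule ltrace_comp_commute) (use lX lY lZ linear_compose in auto)
  then show ?thesis using 1 2 by (simp add: o_assoc)
qed
end


definition eig :: "('a::real_vector \<Rightarrow> 'a) \<Rightarrow> real \<Rightarrow> 'a set" where
  "eig f c = {v. f v = c *\<^sub>R v}"

lemma eig_subspace: "linear f \<Longrightarrow> subspace (eig f c)"
  by (auto simp: eig_def subspace_def linear_add linear_scale linear_0 scaleR_add_right)

lemma weight_components:
  fixes G :: "'i \<Rightarrow> 'a::real_vector \<Rightarrow> 'a"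
  assumes "finite F"
    and lin: "\<And>i. i \<in> A \<Longrightarrow> linear (G i)"
    and W: "subspace W" "\<And>i w. i \<in> A \<Longrightarrow> w \<in> W \<Longrightarrow> G i w \<in> W"
    and dist: "\<And>\<rho> \<sigma>. \<rho> \<in> F \<Longrightarrow> \<sigma> \<in> F \<Longrightarrow> \<rho> \<noteq> \<sigma> \<Longrightarrow> \<exists>i\<in>A. \<rho> i \<noteq> \<sigma> i"
  shows "(\<forall>\<rho>\<in>F. \<forall>i\<in>A. G i (vs \<rho>) = \<rho> i *\<^sub>R vs \<rho>) \<Longrightarrow> sum vs F \<in> W \<Longrightarrow> \<forall>\<rho>\<in>F. vs \<rho> \<in> W"
  using assms(1) dist
proof (induction F arbitrary: vs rule: finite_induct)
  case empty then show ?case by simp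
next
  case (insert \<mu> F)
  have ev: "\<forall>\<rho>\<in>F. \<forall>i\<in>A. G i (vs \<rho>) = \<rho> i *\<^sub>R vs \<rho>" using insert.prems by auto
  have sumW: "vs \<mu> + sum vs F \<in> W" using insert by simp
  have distF: "\<And>\<rho> \<sigma>. \<rho> \<in> F \<Longrightarrow> \<sigma> \<in> F \<Longrightarrow> \<rho> \<noteq> \<sigma> \<Longrightarrow> \<exists>i\<in>A. \<rho> i \<noteq> \<sigma> i"
    using insert.prems(3) by blast
  have key: "(\<rho> i - \<mu> i) *\<^sub>R vs \<rho> \<in> W" if "\<rho> \<in> F" "i \<in> A" for \<rho> i
  proof -
    let ?ws = "\<lambda>\<rho>. (\<rho> i - \<mu> i) *\<^sub>R vs \<rho>"
    have l: "linear (G i)" using lin \<open>i\<in>A\<close> by blast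
    have "G i (vs \<mu> + sum vs F) - \<mu> i *\<^sub>R (vs \<mu> + sum vs F) \<in> W"
      using W sumW \<open>i\<in>A\<close> by (simp add: subspace_diff subspace_scale)
    also have "G i (vs \<mu> + sum vs F) - \<mu> i *\<^sub>R (vs \<mu> + sum vs F) = sum ?ws F"
    proof -
      have "G i (vs \<mu> + sum vs F) = \<mu> i *\<^sub>R vs \<mu> + (\<Sum>\<rho>\<in>F. \<rho> i *\<^sub>R vs \<rho>)"
        using insert.prems(1) \<open>i\<in>A\<close> by (simp add: linear_add[OF l] linear_sum[OF l])
      then show ?thesis
        by (simp add: scaleR_add_right scaleR_diff_left sum_subtractf scaleR_sum_right algebra_simps)
    qed
    finally have "sum ?ws F \<in> W" .
    moreover have "\<forall>\<rho>\<in>F. \<forall>j\<in>A. G j (?ws \<rho>) = \<rho> j *\<^sub>R ?ws \<rho>"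
      using ev lin by (simp add: linear_scale)
    ultimately have "\<forall>\<rho>\<in>F. ?ws \<rho> \<in> W"
      by (intro insert.IH) (assumption | rule distF; assumption)+
    then show ?thesis using that by blast
  qed
  have inF: "vs \<rho> \<in> W" if rF: "\<rho> \<in> F" for \<rho>
  proof -
    obtain i where i: "i \<in> A" "\<rho> i \<noteq> \<mu> i"
      using insert.prems(3)[of \<rho> \<mu>] rF insert.hyps(2) by auto
    have "inverse (\<rho> i - \<mu> i) *\<^sub>R ((\<rho> i - \<mu> i) *\<^sub>R vs \<rho>) \<in> W"
      by (rule subspace_scale[OF W(1) key[OF rF i(1)]])
    then show ?thesis using i by simp
  qed
  then have "sum vs F \<in> W" using W(1) by (simp add: subspace_sum)
  then have "vs \<mu> \<in> W" using sumW W(1)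
    by (metis add_diff_cancel_right' subspace_diff)
  then show ?case using inF by auto
qed

lemma eig_components:
  assumes "finite C" "linear f" "subspace W" "\<And>w. w \<in> W \<Longrightarrow> f w \<in> W"
    and "\<forall>c\<in>C. vs c \<in> eig f c" "sum vs C \<in> W"
  shows "\<forall>c\<in>C. vs c \<in> W"
proof -
  let ?F = "(\<lambda>c (_::unit). c) ` C"
  let ?vs = "\<lambda>\<rho>. vs (\<rho> ())"
  have inj: "inj_on (\<lambda>c (_::unit). c) C" by (auto simp: inj_on_def dest: fun_cong)
  have "sum ?vs ?F = sum vs C" by (simp add: sum.reindex[OF inj] o_def)
  have "\<forall>\<rho>\<in>?F. ?vs \<rho> \<in> W"
    apply (rule weight_components[where G="\<lambda>_. f" and A=UNIV])
    using assms \<open>sum ?vs ?F = sum vs C\<close> by (auto simp: eig_def fun_eq_iff)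
  then show ?thesis by auto
qed

lemma eig_independent:
  assumes "finite C" "linear f" "\<forall>c\<in>C. vs c \<in> eig f c" "sum vs C = 0"
  shows "\<forall>c\<in>C. vs c = 0"
  using eig_components[OF assms(1,2), of "{0}" vs] assms by (auto simp: subspace_def linear_0)

lemma eig_decomp:
  assumes "linear f" "x \<in> span (\<Union>c\<in>S. eig f c)"
  shows "\<exists>C vs. finite C \<and> C \<subseteq> S \<and> (\<forall>c\<in>C. vs c \<in> eig f c) \<and> x = sum vs C"
  using assms(2)
proof (induction rule: span_induct_alt)
  case base
  then show ?case by (rule exI[of _ "{}"]) auto
next
  case (step k x y)
  then obtain c0 where c0: "c0 \<in> S" "x \<in> eig f c0" by auto
  from step obtain C vs where C: "finite C" "C \<subseteq> S" "\<forall>c\<in>C. vs c \<in> eig f c" "y = sum vs C" by blast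
  let ?vs = "\<lambda>c. (if c \<in> C then vs c else 0) + (if c = c0 then k *\<^sub>R x else 0)"
  have sub: "subspace (eig f c)" for c by (rule eig_subspace[OF assms(1)])
  have P1: "\<forall>c\<in>insert c0 C. ?vs c \<in> eig f c"
  proof
    fix c assume "c \<in> insert c0 C"
    have "(if c \<in> C then vs c else 0) \<in> eig f c" using C(3) subspace_0[OF sub] by auto
    moreover have "(if c = c0 then k *\<^sub>R x else 0) \<in> eig f c"
      using c0 subspace_scale[OF sub] subspace_0[OF sub] by auto
    ultimately show "?vs c \<in> eig f c" by (rule subspace_add[OF sub])
  qed
  have P2: "k *\<^sub>R x + y = sum ?vs (insert c0 C)"
  proof -
    have "sum ?vs (insert c0 C) = sum (\<lambda>c. if c \<in> C then vs c else 0) (insert c0 C)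
        + sum (\<lambda>c. if c = c0 then k *\<^sub>R x else 0) (insert c0 C)"
      by (simp add: sum.distrib)
    also have "sum (\<lambda>c. if c \<in> C then vs c else 0) (insert c0 C) = sum vs C"
      using C(1) by (simp add: sum.If_cases Int_absorb1 insert_inter_insert Int_insert_left insert_absorb)
    also have "sum (\<lambda>c. if c = c0 then k *\<^sub>R x else 0) (insert c0 C) = k *\<^sub>R x"
      using C(1) by (simp add: sum.delta)
    finally show ?thesis using C(4) by simp
  qed
  have P3: "finite (insert c0 C)" "insert c0 C \<subseteq> S" using C c0 by auto
  show ?case by (intro exI[of _ "insert c0 C"] exI[of _ ?vs] conjI P1 P2 P3)
qed



lemma diag_span: "real_diagonalizable g \<Longrightarrow> span (\<Union>c. eig g c) = UNIV"
proof -
  have "{v. \<exists>c. g v = c *\<^sub>R v} = (\<Union>c. eig g c)" by (auto simp: eig_def)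
  then show "real_diagonalizable g \<Longrightarrow> span (\<Union>c. eig g c) = UNIV"
    by (simp add: real_diagonalizable_def)
qed

lemma diag_decomp:
  assumes "linear g" "real_diagonalizable g"
  shows "\<exists>C vs. finite C \<and> (\<forall>c\<in>C. vs c \<in> eig g c) \<and> x = sum vs C"
  using eig_decomp[OF assms(1), of x UNIV] diag_span[OF assms(2)] by auto

lemma diag_has_eigvec:
  assumes "linear g" "real_diagonalizable g" "subspace W" "W \<noteq> {0}" "\<And>w. w \<in> W \<Longrightarrow> g w \<in> W"
  shows "\<exists>c. \<exists>v\<in>W. v \<noteq> 0 \<and> g v = c *\<^sub>R v"
proof -
  obtain w where w: "w \<in> W" "w \<noteq> 0" using assms(3,4) subspace_0 by blast
  obtain C vs where C: "finite C" "\<forall>c\<in>C. vs c \<in> eig g c" "w = sum vs C"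
    using diag_decomp[OF assms(1,2)] by blast
  have inW: "\<forall>c\<in>C. vs c \<in> W" using eig_components[OF C(1) assms(1,3) assms(5) C(2)] C(3) w by simp
  obtain c where "c \<in> C" "vs c \<noteq> 0" using C(3) w(2) by (metis sum.neutral)
  then show ?thesis using inW C(2) by (auto simp: eig_def)
qed

lemma joint_eigvec:
  fixes T :: "('a::euclidean_space \<Rightarrow> 'a) set"
  assumes "finite T"
  shows "\<forall>g\<in>T. linear g \<and> real_diagonalizable g \<Longrightarrow> \<forall>g\<in>T. \<forall>h\<in>T. \<forall>x. g (h x) = h (g x)
    \<Longrightarrow> subspace W \<Longrightarrow> W \<noteq> {0} \<Longrightarrow> \<forall>g\<in>T. \<forall>w\<in>W. g w \<in> W
    \<Longrightarrow> \<exists>v\<in>W. v \<noteq> 0 \<and> (\<forall>g\<in>T. \<exists>c. g v = c *\<^sub>R v)"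
  using assms
proof (induction T arbitrary: W rule: finite_induct)
  case empty
  then obtain w where "w \<in> W" "w \<noteq> 0" using subspace_0 by blast
  then show ?case by auto
next
  case (insert g T)
  have lg: "linear g" "real_diagonalizable g" using insert.prems(1) by auto
  obtain c v where v: "v \<in> W" "v \<noteq> 0" "g v = c *\<^sub>R v"
    using diag_has_eigvec[OF lg insert.prems(3,4)] insert.prems(5) by blast
  let ?W = "W \<inter> eig g c"
  have sW: "subspace ?W" using insert.prems(3) eig_subspace[OF lg(1)] by (rule subspace_inter)
  have nz: "?W \<noteq> {0}" using v by (auto simp: eig_def)
  have inv: "\<forall>h\<in>T. \<forall>w\<in>?W. h w \<in> ?W"
  proof (intro ballI)
    fix h w assume h: "h \<in> T" and w: "w \<in> ?W"
    have "h w \<in> W" using insert.prems(5) h w by auto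
    moreover have "g (h w) = h (g w)" using insert.prems(2) h by auto
    then have "g (h w) = c *\<^sub>R h w" using w insert.prems(1) h by (auto simp: eig_def linear_scale)
    ultimately show "h w \<in> ?W" by (auto simp: eig_def)
  qed
  obtain u where u: "u \<in> ?W" "u \<noteq> 0" "\<forall>h\<in>T. \<exists>c. h u = c *\<^sub>R u"
    using insert.IH[OF _ _ sW nz inv] insert.prems(1,2) insert.hyps by auto
  then show ?case by (auto simp: eig_def)
qed



lemma sum_Basis_delta:
  fixes g :: "'a::euclidean_space \<Rightarrow> 'b::real_vector"
  assumes "b \<in> Basis"
  shows "(\<Sum>b'\<in>Basis. (b \<bullet> b') *\<^sub>R g b') = g b"
proof -
  have "(\<Sum>b'\<in>Basis. (b \<bullet> b') *\<^sub>R g b') = (\<Sum>b'\<in>Basis. if b' = b then g b else 0)"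
    using assms by (intro sum.cong) (auto simp: inner_Basis)
  also have "\<dots> = g b" using assms by (simp add: sum.delta')
  finally show ?thesis .
qed

context lie begin

lemma killing_pos:
  assumes ss: "semisimple br" and d: "real_diagonalizable (br x)" and x0: "x \<noteq> 0"
  shows "killing br x x > 0"
proof -
  let ?A = "br x"
  have lA: "linear ?A" by (rule lin2)
  let ?V = "{v. \<exists>c. ?A v = c *\<^sub>R v}"
  have spV: "span ?V = UNIV" using d by (simp add: real_diagonalizable_def)
  obtain B where B: "B \<subseteq> ?V" "independent B" "?V \<subseteq> span B"
    by (rule maximal_independent_subset)
  have spB: "span B = UNIV"
    using span_minimal[OF B(3) subspace_span] spV by auto
  have fB: "finite B" using B(2) by (rule independent_imp_finite)
  have cB: "card B = card (Basis::'a set)"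
    using dim_eq_card_independent[OF B(2)] dim_span[of B] spB by simp
  obtain \<sigma> where \<sigma>: "bij_betw \<sigma> (Basis::'a set) B"
    using finite_same_card_bij[OF finite_Basis fB] cB by metis
  define lam where "lam b = (SOME c. ?A (\<sigma> b) = c *\<^sub>R \<sigma> b)" for b
  have eigb: "?A (\<sigma> b) = lam b *\<^sub>R \<sigma> b" if "b \<in> Basis" for b
  proof -
    have "\<sigma> b \<in> ?V" using \<sigma> B(1) that bij_betwE by blast
    then show ?thesis unfolding lam_def by (metis (mono_tags, lifting) mem_Collect_eq someI_ex)
  qed
  define P where "P y = (\<Sum>b\<in>Basis. (y \<bullet> b) *\<^sub>R \<sigma> b)" for y
  have lP: "linear P"
    by (rule linearI) (simp_all add: P_def inner_add_left scaleR_add_left sum.distrib scaleR_sum_right)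
  have Pb: "P b = \<sigma> b" if "b \<in> Basis" for b
    unfolding P_def by (rule sum_Basis_delta[OF that])
  have surjP: "surj P"
  proof -
    have "B \<subseteq> range P"
    proof
      fix v assume "v \<in> B"
      then obtain b where "b \<in> Basis" "\<sigma> b = v" using \<sigma> by (metis bij_betw_def imageE)
      then show "v \<in> range P" using Pb by (metis rangeI)
    qed
    then have "span B \<subseteq> range P"
      using span_minimal linear_subspace_image[OF lP subspace_UNIV] by blast
    then show ?thesis using spB by auto
  qed
  obtain Q where lQ: "linear Q" and QP: "\<And>y. Q (P y) = y" and PQ: "\<And>y. P (Q y) = y"
    using linear_surjective_isomorphism[OF lP surjP] by auto
  define D where "D y = (\<Sum>b\<in>Basis. (y \<bullet> b) *\<^sub>R (lam b *\<^sub>R b))" for y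
  have lD: "linear D"
    by (rule linearI) (simp_all add: D_def inner_add_left scaleR_add_left sum.distrib scaleR_sum_right distrib_right mult.assoc)
  have Db: "D b = lam b *\<^sub>R b" if "b \<in> Basis" for b
    unfolding D_def by (rule sum_Basis_delta[OF that])
  have AP: "?A \<circ> P = P \<circ> D"
  proof (rule linear_eq_stdbasis)
    show "linear (?A \<circ> P)" by (rule linear_compose[OF lP lA])
    show "linear (P \<circ> D)" by (rule linear_compose[OF lD lP])
    fix b :: 'a assume b: "b \<in> Basis"
    show "(?A \<circ> P) b = (P \<circ> D) b"
      using b by (simp add: Pb Db eigb linear_scale[OF lP])
  qed
  then have AP': "?A (P y) = P (D y)" for y by (metis comp_apply)
  have AA: "?A \<circ> ?A = P \<circ> (D \<circ> D \<circ> Q)"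
  proof
    fix y
    have "?A y = P (D (Q y))" using AP'[of "Q y"] PQ by simp
    then have "?A (?A y) = ?A (P (D (Q y)))" by simp
    also have "\<dots> = P (D (D (Q y)))" using AP' by simp
    finally show "(?A \<circ> ?A) y = (P \<circ> (D \<circ> D \<circ> Q)) y" by simp
  qed
  have lDDQ: "linear (D \<circ> D \<circ> Q)" by (intro linear_compose lD lQ)
  have "killing br x x = ltrace (P \<circ> (D \<circ> D \<circ> Q))"
    by (simp add: killing_def AA)
  also have "\<dots> = ltrace ((D \<circ> D \<circ> Q) \<circ> P)"
    by (rule ltrace_comp_commute[OF lP lDDQ])
  also have "(D \<circ> D \<circ> Q) \<circ> P = D \<circ> D" by (auto simp: QP)
  also have "ltrace (D \<circ> D) = (\<Sum>b\<in>Basis. (lam b)\<^sup>2)"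
    unfolding ltrace_def
    by (intro sum.cong) (auto simp: Db linear_scale[OF lD] power2_eq_square)
  finally have kx: "killing br x x = (\<Sum>b\<in>Basis. (lam b)\<^sup>2)" .
  show ?thesis
  proof (rule ccontr)
    assume "\<not> killing br x x > 0"
    then have "(\<Sum>b\<in>Basis. (lam b)\<^sup>2) = 0"
      using kx sum_nonneg[of Basis "\<lambda>b. (lam b)\<^sup>2"] by fastforce
    then have l0: "\<forall>b\<in>Basis. lam b = 0" by (simp add: sum_nonneg_eq_0_iff)
    have A0: "?A v = 0" for v
    proof (rule linear_eq_0_on_span[OF lA])
      fix w assume "w \<in> B"
      then obtain b where "b \<in> Basis" "\<sigma> b = w" using \<sigma> by (metis bij_betw_def imageE)
      then show "?A w = 0" using eigb l0 by force
    next
      show "v \<in> span B" using spB by simp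
    qed
    have "killing br x y = 0" for y by (simp add: killing_def ltrace_def A0)
    then have "x = 0" using ss by (simp add: semisimple_def)
    then show False using x0 by simp
  qed
qed

end


lemma orthonormal_coeff:
  fixes E :: "'a::euclidean_space set"
  assumes "pairwise orthogonal E" "\<And>e. e \<in> E \<Longrightarrow> norm e = 1" "finite E" "e' \<in> E"
  shows "(\<Sum>e\<in>E. c e *\<^sub>R e) \<bullet> e' = c e'"
proof -
  have "(\<Sum>e\<in>E. c e *\<^sub>R e) \<bullet> e' = (\<Sum>e\<in>E. if e = e' then c e' else 0)"
    unfolding inner_sum_left
  proof (intro sum.cong refl)
    fix e assume e: "e \<in> E"
    show "(c e *\<^sub>R e) \<bullet> e' = (if e = e' then c e' else 0)"
    proof (cases "e = e'")
      case True
      then show ?thesis using assms(2)[OF e] by (simp add: norm_eq_1)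
    next
      case False
      then show ?thesis using assms(1) e assms(4) by (simp add: pairwise_def orthogonal_def)
    qed
  qed
  also have "\<dots> = c e'" using assms(3,4) by (simp add: sum.delta')
  finally show ?thesis .
qed

context lie begin

lemma killing_nondeg_on:
  assumes ss: "semisimple br" and a: "subspace a" "\<forall>x\<in>a. real_diagonalizable (br x)"
    and z: "z \<in> a" "\<forall>t\<in>a. killing br z t = 0"
  shows "z = 0"
proof (rule ccontr)
  assume "z \<noteq> 0"
  then have "killing br z z > 0" using killing_pos[OF ss, of z] z(1) a(2) by blast
  then show False using z by simp
qed

lemma dual_exists:
  assumes ss: "semisimple br" and a: "subspace a" "\<forall>x\<in>a. real_diagonalizable (br x)"
    and l: "linear \<alpha>"
  shows "\<exists>s\<in>a. \<forall>t\<in>a. killing br s t = \<alpha> t"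
proof -
  obtain E where E: "E \<subseteq> a" "pairwise orthogonal E" "\<And>x. x \<in> E \<Longrightarrow> norm x = 1"
      "independent E" "card E = dim a" "span E = a"
    using orthonormal_basis_subspace[OF a(1)] by blast
  have fE: "finite E" using E(4) by (rule independent_imp_finite)
  define M where "M s = (\<Sum>e\<in>E. killing br s e *\<^sub>R e)" for s
  have lM: "linear M"
    by (rule linearI) (simp_all add: M_def linear_add[OF killing_lin1] linear_scale[OF killing_lin1]
        scaleR_add_left sum.distrib scaleR_sum_right)
  have Mco: "M s \<bullet> e' = killing br s e'" if "e' \<in> E" for s e'
    unfolding M_def by (rule orthonormal_coeff[OF E(2) E(3) fE that])
  have Ma1: "M s \<in> a" for s
    unfolding M_def by (rule subspace_sum[OF a(1)]) (use E(1) subspace_scale[OF a(1)] in blast)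
  then have Ma: "M ` a \<subseteq> a" by blast
  have inj: "inj_on M a"
  proof (rule inj_onI)
    fix s s' assume s: "s \<in> a" "s' \<in> a" "M s = M s'"
    have "killing br (s - s') e = 0" if "e \<in> E" for e
      using Mco[OF that, of s] Mco[OF that, of s'] s(3) linear_diff[OF killing_lin1, of s s' e] by simp
    then have "killing br (s - s') t = 0" if "t \<in> a" for t
      using linear_eq_0_on_span[OF killing_lin2[of "s - s'"], of E t] that E(6) by auto
    then have "s - s' = 0"
      using killing_nondeg_on[OF ss a, of "s - s'"] s a(1) by (simp add: subspace_diff)
    then show "s = s'" by simp
  qed
  have "dim (M ` a) = dim a"
    by (rule dim_image_eq[OF lM]) (use inj a(1) in \<open>simp add: span_eq_iff[THEN iffD2]\<close>)
  then have Meq: "M ` a = a"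
    by (intro subspace_dim_equal linear_subspace_image[OF lM a(1)] a(1) Ma) simp
  define w where "w = (\<Sum>e\<in>E. \<alpha> e *\<^sub>R e)"
  have "w \<in> a" unfolding w_def by (rule subspace_sum[OF a(1)]) (use E(1) subspace_scale[OF a(1)] in blast)
  then obtain s where s: "s \<in> a" "M s = w" using Meq by (metis image_iff)
  have "killing br s e = \<alpha> e" if "e \<in> E" for e
    using Mco[OF that, of s] s(2) orthonormal_coeff[OF E(2) E(3) fE that, of \<alpha>] by (simp add: w_def)
  then have "killing br s t = \<alpha> t" if "t \<in> a" for t
    using linear_eq_on_span[OF killing_lin2[of s] l, of E t] that E(6) by auto
  then show ?thesis using s(1) by blast
qed

lemma dual_vec_prop:
  assumes ss: "semisimple br" and a: "subspace a" "\<forall>x\<in>a. real_diagonalizable (br x)"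
    and l: "linear \<alpha>"
  shows "dual_vec br a (restrict \<alpha> a) \<in> a \<and> (\<forall>t\<in>a. killing br (dual_vec br a (restrict \<alpha> a)) t = \<alpha> t)"
proof -
  obtain s where s: "s \<in> a" "\<forall>t\<in>a. killing br s t = \<alpha> t" using dual_exists[OF assms] by blast
  have uniq: "s' = s" if "s' \<in> a" "\<forall>t\<in>a. killing br s' t = restrict \<alpha> a t" for s'
  proof -
    have "killing br (s' - s) t = 0" if "t \<in> a" for t
      using that \<open>\<forall>t\<in>a. killing br s' t = restrict \<alpha> a t\<close> s linear_diff[OF killing_lin1, of s' s t] by simp
    then have "s' - s = 0"
      using killing_nondeg_on[OF ss a, of "s' - s"] s \<open>s' \<in> a\<close> a(1) by (simp add: subspace_diff)
    then show ?thesis by simp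
  qed
  have "dual_vec br a (restrict \<alpha> a) = s"
    unfolding dual_vec_def
  proof (rule the_equality)
    show "s \<in> a \<and> (\<forall>t\<in>a. killing br s t = restrict \<alpha> a t)" using s by simp
    show "\<And>s'. s' \<in> a \<and> (\<forall>t\<in>a. killing br s' t = restrict \<alpha> a t) \<Longrightarrow> s' = s"
      using uniq by blast
  qed
  then show ?thesis using s by simp
qed

end


lemma eig_not_in_others:
  assumes lf: "linear f" and x: "x \<in> eig f d" "x \<in> span (\<Union>c\<in>S. eig f c)" and d: "d \<notin> S"
  shows "x = 0"
proof -
  obtain C vs where C: "finite C" "C \<subseteq> S" "\<forall>c\<in>C. vs c \<in> eig f c" "x = sum vs C"
    using eig_decomp[OF lf x(2)] by blast
  have dC: "d \<notin> C" using C(2) d by blast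
  let ?vs = "vs(d := - x)"
  have s1: "sum ?vs C = sum vs C" using dC by (intro sum.cong) auto
  have "sum ?vs (insert d C) = 0" using C(1) dC s1 C(4) by simp
  moreover have "\<forall>c\<in>insert d C. ?vs c \<in> eig f c"
    using C(3) x(1) dC by (auto simp: eig_def linear_neg[OF lf])
  ultimately have "\<forall>c\<in>insert d C. ?vs c = 0"
    using eig_independent[of "insert d C" f ?vs] C(1) lf by blast
  then show ?thesis by simp
qed

lemma finite_eigenvalues:
  fixes f :: "'a::euclidean_space \<Rightarrow> 'a"
  assumes lf: "linear f"
  shows "finite {c. eig f c \<noteq> {0}}"
proof -
  have "card F \<le> DIM('a)" if F: "F \<subseteq> {c. eig f c \<noteq> {0}}" "finite F" for F
  proof -
    have "\<exists>v. v \<in> eig f c \<and> v \<noteq> 0" if "c \<in> F" for c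
      using F that subspace_0[OF eig_subspace[OF lf, of c]] by blast
    then obtain v where v: "\<And>c. c \<in> F \<Longrightarrow> v c \<in> eig f c \<and> v c \<noteq> 0" by metis
    have inj: "inj_on v F"
    proof (rule inj_onI)
      fix c d assume cd: "c \<in> F" "d \<in> F" "v c = v d"
      have "c *\<^sub>R v c = f (v c)" using v[OF cd(1)] by (simp add: eig_def)
      also have "\<dots> = d *\<^sub>R v c" using v[OF cd(2)] cd(3) by (simp add: eig_def)
      finally have "c *\<^sub>R v c = d *\<^sub>R v c" .
      then show "c = d" using v[OF cd(1)] by (simp add: scaleR_cancel_right)
    qed
    have "independent (v ` F)"
    proof
      assume "dependent (v ` F)"
      then obtain u where u: "\<exists>w\<in>v ` F. u w \<noteq> 0" "(\<Sum>w\<in>v ` F. u w *\<^sub>R w) = 0"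
        using dependent_finite[of "v ` F"] F(2) by blast
      have "(\<Sum>c\<in>F. u (v c) *\<^sub>R v c) = 0" using u(2) by (simp add: sum.reindex[OF inj])
      moreover have "\<forall>c\<in>F. u (v c) *\<^sub>R v c \<in> eig f c"
        using v by (auto simp: eig_def linear_scale[OF lf])
      ultimately have "\<forall>c\<in>F. u (v c) *\<^sub>R v c = 0"
        using eig_independent[of F f "\<lambda>c. u (v c) *\<^sub>R v c"] F(2) lf by blast
      then show False using u(1) v by auto
    qed
    then have "card (v ` F) \<le> DIM('a)" using independent_bound by blast
    then show ?thesis using card_image[OF inj] by simp
  qed
  then show ?thesis using finite_if_finite_subsets_card_bdd by blast
qed

context lie begin

lemma bispan:
  assumes S: "subspace S" and AB: "\<And>x y. x \<in> A \<Longrightarrow> y \<in> B \<Longrightarrow> br x y \<in> S"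
    and x: "x \<in> span A" and y: "y \<in> span B"
  shows "br x y \<in> S"
proof -
  have 1: "br x' y' \<in> S" if "x' \<in> span A" "y' \<in> B" for x' y'
  proof -
    have "span A \<subseteq> (\<lambda>x. br x y') -` S"
      by (rule span_minimal) (use AB that(2) linear_subspace_vimage[OF lin1 S] in auto)
    then show ?thesis using that(1) by auto
  qed
  have "span B \<subseteq> br x -` S"
    by (rule span_minimal) (use 1 x linear_subspace_vimage[OF lin2 S] in auto)
  then show ?thesis using y by auto
qed

end

locale grad = lie br for br :: "'a::euclidean_space \<Rightarrow> 'a \<Rightarrow> 'a" +
  fixes X :: 'a
  assumes dX: "real_diagonalizable (br X)"
begin

abbreviation "E \<equiv> eig (br X)"

lemma E_sub: "subspace (E c)" by (rule eig_subspace[OF lin2])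

lemma g1: "v \<in> E c \<Longrightarrow> w \<in> E d \<Longrightarrow> br v w \<in> E (c + d)"
  by (simp add: eig_def jac[of X v w] scale1 scale2 scaleR_add_left)

lemma g2:
  assumes "v \<in> E c" "w \<in> E d" "c + d \<noteq> 0"
  shows "killing br v w = 0"
proof -
  have "killing br (br X v) w = - killing br v (br X w)" by (rule killing_invariant)
  then have "c * killing br v w = - (d * killing br v w)"
    using assms by (simp add: eig_def linear_scale[OF killing_lin1] linear_scale[OF killing_lin2])
  then have "(c + d) * killing br v w = 0" by (simp add: algebra_simps)
  then show ?thesis using assms(3) by simp
qed

lemma span_all: "span (\<Union>c. E c) = UNIV" using diag_span[OF dX] .

end


context lie begin

lemma simple_inside:
  "lie_ideal br V \<Longrightarrow> V \<noteq> {0} \<Longrightarrow> \<exists>I. simple_factor br I \<and> I \<subseteq> V"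
proof (induction "dim V" arbitrary: V rule: less_induct)
  case less
  show ?case
  proof (cases "simple_factor br V")
    case True then show ?thesis by blast
  next
    case False
    then obtain J where J: "lie_ideal br J" "J \<subseteq> V" "J \<noteq> {0}" "J \<noteq> V"
      using less.prems by (auto simp: simple_factor_def)
    have sJ: "subspace J" and sV: "subspace V" using J(1) less.prems(1) by (auto simp: lie_ideal_def)
    have "span J \<subset> span V" using J(2,4) sJ sV by (simp add: span_eq_iff[THEN iffD2] psubset_eq)
    then have "dim J < dim V" by (rule dim_psubset)
    then obtain I where "simple_factor br I" "I \<subseteq> J" using less.hyps J(1,3) by blast
    then show ?thesis using J(2) by blast
  qed
qed

end

locale stp = grad br X for br :: "'a::euclidean_space \<Rightarrow> 'a \<Rightarrow> 'a" and X +
  fixes p a :: "'a set"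
  assumes ss: "semisimple br"
    and pdef: "p = span {v. \<exists>c\<ge>0. br X v = c *\<^sub>R v}"
    and ap: "absolutely_proper br p"
    and msp: "maximal_split_toral_in br p a"
begin

definition "UX = span (\<Union>c\<in>{0<..}. E c)"

lemma a_sub: "subspace a" and a_p: "a \<subseteq> p" and a_comm: "\<And>x y. x \<in> a \<Longrightarrow> y \<in> a \<Longrightarrow> br x y = 0"
  and a_diag: "\<And>x. x \<in> a \<Longrightarrow> real_diagonalizable (br x)"
  using msp unfolding maximal_split_toral_in_def split_toral_def by blast+

lemma p_eq: "p = span (\<Union>c\<in>{0..}. E c)"
proof -
  have "{v. \<exists>c\<ge>0. br X v = c *\<^sub>R v} = (\<Union>c\<in>{0..}. E c)" by (auto simp: eig_def)
  then show ?thesis using pdef by simp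
qed

lemma UX_p: "UX \<subseteq> p"
  unfolding UX_def p_eq by (rule span_mono) (use less_imp_le in fastforce)

lemma UX_sub: "subspace UX" unfolding UX_def by simp

lemma UX_inv:
  assumes t: "t \<in> p" and x: "x \<in> UX"
  shows "br t x \<in> UX"
proof -
  have "br v w \<in> UX" if v: "v \<in> (\<Union>c\<in>{0..}. E c)" and w: "w \<in> (\<Union>c\<in>{0<..}. E c)" for v w
  proof -
    obtain c where c: "c \<ge> 0" "v \<in> E c" using v by auto
    obtain d where d: "d > 0" "w \<in> E d" using w by auto
    have "br v w \<in> E (c + d)" using c(2) d(2) by (rule g1)
    moreover have "c + d \<in> {0<..}" using c d by simp
    ultimately have "br v w \<in> (\<Union>c\<in>{0<..}. E c)" by blast
    then show ?thesis unfolding UX_def by (rule span_base)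
  qed
  then show ?thesis using bispan[OF UX_sub, of "\<Union>c\<in>{0..}. E c" "\<Union>c\<in>{0<..}. E c" t x] t x
    unfolding p_eq UX_def by blast
qed

lemma ideal_in_p_zero:
  assumes "lie_ideal br V" "V \<subseteq> p"
  shows "V = {0}"
proof (rule ccontr)
  assume "V \<noteq> {0}"
  then obtain I where I: "simple_factor br I" "I \<subseteq> V" using simple_inside assms(1) by blast
  have "projection_onto br p I"
    unfolding projection_onto_def killing_perp_def
  proof
    fix y assume "y \<in> I"
    then have "y \<in> p" using I(2) assms(2) by blast
    moreover have "y - y \<in> {z. \<forall>w\<in>I. killing br z w = 0}" using linear_0[OF killing_lin1] by simp
    ultimately show "\<exists>x\<in>p. x - y \<in> {z. \<forall>w\<in>I. killing br z w = 0}" by blast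
  qed
  then show False using ap I(1) by (auto simp: absolutely_proper_def)
qed

lemma p_decomp:
  assumes "s \<in> p"
  shows "\<exists>s0 sp. s0 \<in> E 0 \<and> sp \<in> UX \<and> s = s0 + sp"
proof -
  have "{0::real..} = insert 0 {0<..}" by auto
  then have "(\<Union>c\<in>{0..}. E c) = E 0 \<union> (\<Union>c\<in>{0<..}. E c)" by simp
  then have "s \<in> span (E 0 \<union> (\<Union>c\<in>{0<..}. E c))" using assms p_eq by simp
  then obtain x y where "s = x + y" "x \<in> span (E 0)" "y \<in> UX" unfolding span_Un UX_def by blast
  moreover have "span (E 0) = E 0" using E_sub by (simp add: span_eq_iff)
  ultimately show ?thesis by blast
qed

end


context stp begin

lemma UX_nil:
  assumes y: "y \<in> UX"
  shows "\<exists>n. (br y ^^ n) = (\<lambda>_. 0)"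
proof -
  define L where "L = {c. E c \<noteq> {0}}"
  have fin: "finite L" unfolding L_def by (rule finite_eigenvalues[OF lin2])
  have E0: "E c = {0}" if "c \<notin> L" for c using that by (simp add: L_def)
  have vL: "c \<in> L" if "v \<in> E c" "v \<noteq> 0" for v c
    using that by (auto simp: L_def)
  define M where "M = Max (insert 0 (abs ` L)) + 1"
  have M: "\<bar>c\<bar> < M" if "c \<in> L" for c
  proof -
    have "\<bar>c\<bar> \<le> Max (insert 0 (abs ` L))" using fin that by (intro Max_ge) auto
    then show ?thesis by (simp add: M_def)
  qed
  have Mpos: "M > 0"
  proof -
    have "0 \<le> Max (insert 0 (abs ` L))" using fin by (intro Max_ge) auto
    then show ?thesis by (simp add: M_def)
  qed
  let ?P = "{c\<in>L. c > 0}"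
  show ?thesis
  proof (cases "?P = {}")
    case True
    have "(\<Union>c\<in>{0<..}. E c) \<subseteq> {0}"
    proof
      fix v assume "v \<in> (\<Union>c\<in>{0<..}. E c)"
      then obtain c where "c > 0" "v \<in> E c" by auto
      then show "v \<in> {0}" using vL True by blast
    qed
    then have "UX \<subseteq> {0}" unfolding UX_def by (rule span_minimal) (rule subspace_single_0)
    then have "y = 0" using y by blast
    then have "(br y ^^ 1) = (\<lambda>_. 0)" by (simp add: fun_eq_iff)
    then show ?thesis by blast
  next
    case False
    define \<delta> where "\<delta> = Min ?P"
    have finP: "finite ?P" using fin by simp
    have dpos: "\<delta> > 0" unfolding \<delta>_def using Min_in[OF finP False] by simp
    have dle: "\<delta> \<le> c" if "c \<in> ?P" for c unfolding \<delta>_def using finP that by (rule Min_le)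
    define G where "G t = span (\<Union>c\<in>{t..}. E c)" for t
    have Gall: "x \<in> G (- M)" for x
    proof -
      have "(\<Union>c. E c) \<subseteq> G (- M)"
      proof
        fix v assume "v \<in> (\<Union>c. E c)"
        then obtain c where c: "v \<in> E c" by auto
        show "v \<in> G (- M)"
        proof (cases "v = 0")
          case True then show ?thesis by (simp add: G_def span_0)
        next
          case False
          then have "c \<in> L" using vL c by blast
          then have "c \<in> {- M..}" using M[of c] by simp
          then show ?thesis unfolding G_def using c by (intro span_base) blast
        qed
      qed
      then have "span (\<Union>c. E c) \<subseteq> G (- M)" unfolding G_def by (rule span_minimal) simp
      then show ?thesis using span_all by blast
    qed
    have Gtop: "G t \<subseteq> {0}" if "t \<ge> M" for t
    proof -
      have "(\<Union>c\<in>{t..}. E c) \<subseteq> {0}"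
      proof
        fix v assume "v \<in> (\<Union>c\<in>{t..}. E c)"
        then obtain c where c: "c \<ge> t" "v \<in> E c" by auto
        show "v \<in> {0}"
        proof (rule ccontr)
          assume "v \<notin> {0}"
          then have "c \<in> L" using vL c by blast
          then show False using M[of c] c that by simp
        qed
      qed
      then show ?thesis unfolding G_def by (rule span_minimal) (rule subspace_single_0)
    qed
    have step: "br y x \<in> G (t + \<delta>)" if x: "x \<in> G t" for x t
    proof -
      have "br v w \<in> G (t + \<delta>)" if v: "v \<in> (\<Union>c\<in>{0<..}. E c)" and w: "w \<in> (\<Union>c\<in>{t..}. E c)" for v w
      proof (cases "v = 0 \<or> w = 0")
        case True then show ?thesis by (auto simp: G_def span_0)
      next
        case False
        obtain c where c: "c > 0" "v \<in> E c" using v by auto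
        obtain d where d: "d \<ge> t" "w \<in> E d" using w by auto
        have "c \<in> ?P" using vL[OF c(2)] False c(1) by blast
        then have "c + d \<ge> t + \<delta>" using dle d(1) by fastforce
        moreover have "br v w \<in> E (c + d)" using c(2) d(2) by (rule g1)
        ultimately show ?thesis unfolding G_def by (intro span_base) blast
      qed
      moreover have "subspace (G (t + \<delta>))" by (simp add: G_def)
      ultimately show ?thesis
        using bispan[of "G (t + \<delta>)" "\<Union>c\<in>{0<..}. E c" "\<Union>c\<in>{t..}. E c" y x] y x
        unfolding UX_def G_def by blast
    qed
    have iter: "(br y ^^ n) x \<in> G (- M + real n * \<delta>)" for n x
    proof (induction n)
      case 0 then show ?case using Gall by simp
    next
      case (Suc n)
      have "(br y ^^ Suc n) x = br y ((br y ^^ n) x)" by simp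
      also have "\<dots> \<in> G (- M + real n * \<delta> + \<delta>)" using Suc.IH by (rule step)
      finally show ?case by (simp add: algebra_simps)
    qed
    define n where "n = nat \<lceil>2 * M / \<delta>\<rceil>"
    have "real n \<ge> 2 * M / \<delta>" unfolding n_def by linarith
    then have "real n * \<delta> \<ge> 2 * M" using dpos by (simp add: field_simps)
    then have "- M + real n * \<delta> \<ge> M" by simp
    then have "(br y ^^ n) x = 0" for x using iter[of n x] Gtop by blast
    then show ?thesis by blast
  qed
qed

lemma UX_u: "UX \<subseteq> unipotent_radical br p"
proof -
  have "UX \<in> {J. subspace J \<and> J \<subseteq> p \<and> (\<forall>x\<in>p. \<forall>y\<in>J. br x y \<in> J) \<and> (\<forall>y\<in>J. \<exists>n. (br y ^^ n) = (\<lambda>_. 0))}"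
  proof (intro CollectI conjI ballI)
    show "subspace UX" by (rule UX_sub)
    show "UX \<subseteq> p" by (rule UX_p)
    show "br x y \<in> UX" if "x \<in> p" "y \<in> UX" for x y using that by (rule UX_inv)
    show "\<exists>n. (br y ^^ n) = (\<lambda>_. 0)" if "y \<in> UX" for y using that by (rule UX_nil)
  qed
  then have "UX \<subseteq> \<Union>{J. subspace J \<and> J \<subseteq> p \<and> (\<forall>x\<in>p. \<forall>y\<in>J. br x y \<in> J) \<and> (\<forall>y\<in>J. \<exists>n. (br y ^^ n) = (\<lambda>_. 0))}"
    by (rule Union_upper)
  then show ?thesis unfolding unipotent_radical_def using span_superset by (rule order_trans)
qed

end


context stp begin

lemma stepA:
  assumes s: "s \<in> a" and H: "\<forall>\<rho>\<in>roots_on br a (unipotent_radical br p). \<rho> s = 0"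
    and x: "x \<in> UX"
  shows "br s x = 0"
proof (rule ccontr)
  assume nz: "br s x \<noteq> 0"
  have sp: "s \<in> p" using s a_p by blast
  have ds: "real_diagonalizable (br s)" using s by (rule a_diag)
  obtain C vs where C: "finite C" "\<forall>c\<in>C. vs c \<in> eig (br s) c" "x = sum vs C"
    using diag_decomp[OF lin2 ds] by blast
  have inU: "\<forall>c\<in>C. vs c \<in> UX"
    using eig_components[OF C(1) lin2 UX_sub _ C(2)] UX_inv[OF sp] C(3) x by blast
  have "br s x = (\<Sum>c\<in>C. c *\<^sub>R vs c)"
    using C(2,3) by (simp add: linear_sum[OF lin2] eig_def)
  then obtain c where c: "c \<in> C" "c *\<^sub>R vs c \<noteq> 0" using nz by (metis sum.neutral)
  then have c0: "c \<noteq> 0" and v0: "vs c \<noteq> 0" by auto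
  let ?W = "UX \<inter> eig (br s) c"
  have sW: "subspace ?W" by (rule subspace_inter[OF UX_sub eig_subspace[OF lin2]])
  have nW: "?W \<noteq> {0}" using inU C(2) c(1) v0 by blast
  obtain Bs where Bs: "Bs \<subseteq> a" "independent Bs" "a \<subseteq> span Bs"
    using maximal_independent_subset[of a] by blast
  have fBs: "finite Bs" using Bs(2) by (rule independent_imp_finite)
  have invW: "\<forall>g\<in>br ` Bs. \<forall>w\<in>?W. g w \<in> ?W"
  proof (intro ballI)
    fix g w assume g: "g \<in> br ` Bs" and w: "w \<in> ?W"
    then obtain b where b: "b \<in> Bs" "g = br b" by blast
    have ba: "b \<in> a" using b Bs(1) by blast
    have "br b w \<in> UX" using UX_inv a_p ba w by blast
    moreover have "br s (br b w) = c *\<^sub>R br b w"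
    proof -
      have "br s (br b w) = br (br s b) w + br b (br s w)" by (rule jac)
      also have "\<dots> = br b (c *\<^sub>R w)" using a_comm[OF s ba] w by (simp add: eig_def)
      finally show ?thesis by (simp add: scale2)
    qed
    ultimately show "g w \<in> ?W" using b by (simp add: eig_def)
  qed
  have lT: "\<forall>g\<in>br ` Bs. linear g \<and> real_diagonalizable g"
    using Bs(1) a_diag lin2 by blast
  have cT: "\<forall>g\<in>br ` Bs. \<forall>h\<in>br ` Bs. \<forall>z. g (h z) = h (g z)"
  proof (intro ballI allI)
    fix g h z assume "g \<in> br ` Bs" "h \<in> br ` Bs"
    then obtain b b' where bb: "b \<in> a" "b' \<in> a" "g = br b" "h = br b'" using Bs(1) by blast
    have "br b (br b' z) = br (br b b') z + br b' (br b z)" by (rule jac)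
    then show "g (h z) = h (g z)" using bb a_comm[of b b'] by simp
  qed
  obtain v where v: "v \<in> ?W" "v \<noteq> 0" "\<forall>g\<in>br ` Bs. \<exists>\<mu>. g v = \<mu> *\<^sub>R v"
    using joint_eigvec[of "br ` Bs" ?W] fBs lT cT sW nW invW by blast
  define Z where "Z = {t. \<exists>\<mu>. br t v = \<mu> *\<^sub>R v}"
  have sZ: "subspace Z"
    unfolding subspace_def Z_def
  proof (intro conjI ballI allI)
    show "0 \<in> {t. \<exists>\<mu>. br t v = \<mu> *\<^sub>R v}" by (auto intro: exI[of _ 0])
    fix t1 t2 assume "t1 \<in> {t. \<exists>\<mu>. br t v = \<mu> *\<^sub>R v}" "t2 \<in> {t. \<exists>\<mu>. br t v = \<mu> *\<^sub>R v}"
    then obtain m1 m2 where "br t1 v = m1 *\<^sub>R v" "br t2 v = m2 *\<^sub>R v" by blast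
    then show "t1 + t2 \<in> {t. \<exists>\<mu>. br t v = \<mu> *\<^sub>R v}"
      by (auto simp: add1 scaleR_add_left intro!: exI[of _ "m1 + m2"])
  next
    fix k :: real and t1 assume "t1 \<in> {t. \<exists>\<mu>. br t v = \<mu> *\<^sub>R v}"
    then obtain m1 where "br t1 v = m1 *\<^sub>R v" by blast
    then show "k *\<^sub>R t1 \<in> {t. \<exists>\<mu>. br t v = \<mu> *\<^sub>R v}"
      by (auto simp: scale1 intro!: exI[of _ "k * m1"])
  qed
  have "Bs \<subseteq> Z" using v(3) by (auto simp: Z_def)
  then have aZ: "a \<subseteq> Z" using span_minimal[OF _ sZ] Bs(3) by blast
  define \<alpha> where "\<alpha> z = (br z v \<bullet> v) / (v \<bullet> v)" for z
  have l\<alpha>: "linear \<alpha>"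
    by (rule linearI) (simp_all add: \<alpha>_def add1 scale1 inner_add_left add_divide_distrib)
  have vv: "v \<bullet> v \<noteq> 0" using v(2) by simp
  have wt: "br t v = \<alpha> t *\<^sub>R v" if ta: "t \<in> a" for t
  proof -
    obtain \<mu> where "br t v = \<mu> *\<^sub>R v" using aZ ta by (auto simp: Z_def)
    moreover then have "\<alpha> t = \<mu>" using vv by (simp add: \<alpha>_def)
    ultimately show ?thesis by simp
  qed
  have "\<alpha> s = c"
  proof -
    have "br s v = c *\<^sub>R v" using v(1) by (simp add: eig_def)
    then show ?thesis using wt[OF s] v(2) by (metis scaleR_cancel_right)
  qed
  have vu: "v \<in> unipotent_radical br p" using v(1) UX_u by blast
  have "restrict \<alpha> a \<in> roots_on br a (unipotent_radical br p)"
    unfolding roots_on_def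
    using l\<alpha> s \<open>\<alpha> s = c\<close> c0 vu v(2) wt by blast
  then have "restrict \<alpha> a s = 0" using H by blast
  then show False using s \<open>\<alpha> s = c\<close> c0 by simp
qed


lemma roots_zero_imp_zero:
  assumes s: "s \<in> a" and H: "\<forall>\<rho>\<in>roots_on br a (unipotent_radical br p). \<rho> s = 0"
  shows "s = 0"
proof -
  have A: "br s x = 0" if "x \<in> UX" for x using stepA[OF s H that] .
  obtain s0 sp where dec: "s0 \<in> E 0" "sp \<in> UX" "s = s0 + sp" using p_decomp a_p s by blast
  have B: "br s0 x = 0" if x: "x \<in> E d" and d: "d > 0" for x d
  proof -
    have xU: "x \<in> UX" unfolding UX_def using x d by (intro span_base) blast
    have "br s0 x = - br sp x" using A[OF xU] dec(3) by (simp add: add1 eq_neg_iff_add_eq_0)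
    moreover have "br sp x \<in> span (\<Union>c\<in>{d<..}. E c)"
    proof (rule bispan[OF subspace_span, of "\<Union>c\<in>{0<..}. E c" "E d"])
      fix v w assume v: "v \<in> (\<Union>c\<in>{0<..}. E c)" and w: "w \<in> E d"
      obtain c where c: "c > 0" "v \<in> E c" using v by auto
      have "br v w \<in> E (c + d)" using c(2) w by (rule g1)
      moreover have "c + d \<in> {d<..}" using c by simp
      ultimately show "br v w \<in> span (\<Union>c\<in>{d<..}. E c)" by (intro span_base) blast
    next
      show "sp \<in> span (\<Union>c\<in>{0<..}. E c)" using dec(2) by (simp add: UX_def)
      show "x \<in> span (E d)" using x by (rule span_base)
    qed
    ultimately have "br s0 x \<in> span (\<Union>c\<in>{d<..}. E c)" by (simp add: span_neg)
    moreover have "br s0 x \<in> E d" using g1[OF dec(1) x] by simp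
    ultimately show ?thesis using eig_not_in_others[OF lin2, where x="br s0 x" and d=d and S="{d<..}"] by simp
  qed
  have C: "br s0 y = 0" if y: "y \<in> E e" and e: "e < 0" for y e
  proof -
    have "killing br (br s0 y) z = 0" for z
    proof (rule linear_eq_0_on_span[OF killing_lin2])
      show "z \<in> span (\<Union>c. E c)" using span_all by simp
    next
      fix w assume "w \<in> (\<Union>c. E c)"
      then obtain c where w: "w \<in> E c" by auto
      have k: "killing br (br s0 y) w = - killing br y (br s0 w)" by (rule killing_invariant)
      have s0w: "br s0 w \<in> E c" using g1[OF dec(1) w] by simp
      show "killing br (br s0 y) w = 0"
      proof (cases "c = - e")
        case True
        then have "br s0 w = 0" using B[OF w] e by simp
        then show ?thesis using k linear_0[OF killing_lin2] by simp
      next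
        case False
        then have "e + c \<noteq> 0" by simp
        then show ?thesis using k g2[OF y s0w] by simp
      qed
    qed
    then show ?thesis using ss by (simp add: semisimple_def)
  qed
  define V where "V = {y \<in> E 0. \<forall>c. c \<noteq> 0 \<longrightarrow> (\<forall>x\<in>E c. br y x = 0)}"
  have s0V: "s0 \<in> V"
    unfolding V_def
  proof (intro CollectI conjI allI impI ballI)
    show "s0 \<in> E 0" by (rule dec(1))
    fix c x assume "c \<noteq> 0" "x \<in> E c"
    then show "br s0 x = 0" using B C by (cases "c > 0") auto
  qed
  have sV: "subspace V"
    unfolding subspace_def
  proof (intro conjI ballI allI)
    show "0 \<in> V" unfolding V_def using subspace_0[OF E_sub] by simp
    fix x y assume "x \<in> V" "y \<in> V"
    then show "x + y \<in> V" unfolding V_def using subspace_add[OF E_sub] by (simp add: add1)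
  next
    fix k :: real and x assume "x \<in> V"
    then show "k *\<^sub>R x \<in> V" unfolding V_def using subspace_scale[OF E_sub] by (simp add: scale1)
  qed
  have idV: "lie_ideal br V"
    unfolding lie_ideal_def
  proof (intro conjI allI ballI sV)
    fix x y assume y: "y \<in> V"
    have "x \<in> (\<lambda>x. br x y) -` V"
    proof (rule subsetD[OF span_minimal])
      show "subspace ((\<lambda>x. br x y) -` V)" by (rule linear_subspace_vimage[OF lin1 sV])
      show "x \<in> span (\<Union>c. E c)" using span_all by simp
      show "(\<Union>c. E c) \<subseteq> (\<lambda>x. br x y) -` V"
      proof
        fix w assume "w \<in> (\<Union>c. E c)"
        then obtain c where w: "w \<in> E c" by auto
        show "w \<in> (\<lambda>x. br x y) -` V"
        proof (cases "c = 0")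
          case False
          then have "br y w = 0" using y w by (auto simp: V_def)
          then have "br w y = 0" using anti[of w y] by simp
          then show ?thesis using subspace_0[OF sV] by simp
        next
          case True
          have y0: "y \<in> E 0" using y by (simp add: V_def)
          have "br w y \<in> E 0" using g1[OF w y0] True by simp
          moreover have "br (br w y) z = 0" if "e \<noteq> 0" "z \<in> E e" for e z
          proof -
            have "br w z \<in> E e" using g1[OF w that(2)] True by simp
            then have "br y (br w z) = 0" using y that(1) by (auto simp: V_def)
            moreover have "br y z = 0" using y that by (auto simp: V_def)
            ultimately show ?thesis by (simp add: jac2)
          qed
          ultimately show ?thesis by (auto simp: V_def)
        qed
      qed
    qed
    then show "br x y \<in> V" by simp
  qed
  have Vp: "V \<subseteq> p"
  proof
    fix y assume "y \<in> V"
    then have "y \<in> (\<Union>c\<in>{0..}. E c)" by (auto simp: V_def)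
    then show "y \<in> p" unfolding p_eq by (rule span_base)
  qed
  have "V = {0}" by (rule ideal_in_p_zero[OF idV Vp])
  then have "s0 = 0" using s0V by simp
  then have sU: "s \<in> UX" using dec by simp
  obtain n where n: "(br s ^^ n) = (\<lambda>_. 0)" using UX_nil[OF sU] by blast
  have pw: "(br s ^^ m) w = \<mu> ^ m *\<^sub>R w" if "br s w = \<mu> *\<^sub>R w" for w \<mu> m
    by (induction m) (simp_all add: that scale2)
  have "br s w = 0" for w
  proof (rule linear_eq_0_on_span[OF lin2])
    show "w \<in> span {v. \<exists>c. br s v = c *\<^sub>R v}" using a_diag[OF s] by (simp add: real_diagonalizable_def)
  next
    fix v assume "v \<in> {v. \<exists>c. br s v = c *\<^sub>R v}"
    then obtain \<mu> where mu: "br s v = \<mu> *\<^sub>R v" by blast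
    have "\<mu> ^ n *\<^sub>R v = 0" using pw[OF mu, of n] n by simp
    then have "\<mu> = 0 \<or> v = 0" by auto
    then show "br s v = 0" using mu by auto
  qed
  then have "killing br s y = 0" for y by (simp add: killing_def ltrace_def)
  then show ?thesis using ss by (simp add: semisimple_def)
qed

end


lemma span_image_sum:
  fixes g :: "'r \<Rightarrow> 'a::real_vector"
  assumes "finite R" "y \<in> span (g ` R)"
  shows "\<exists>c. y = (\<Sum>\<rho>\<in>R. c \<rho> *\<^sub>R g \<rho>)"
  using assms(2)
proof (induction rule: span_induct_alt)
  case base
  show ?case by (rule exI[of _ "\<lambda>_. 0"]) simp
next
  case (step k x y)
  from step obtain \<rho>0 where r0: "\<rho>0 \<in> R" "x = g \<rho>0" by blast
  from step obtain c where c: "y = (\<Sum>\<rho>\<in>R. c \<rho> *\<^sub>R g \<rho>)" by blast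
  let ?c = "\<lambda>\<rho>. c \<rho> + (if \<rho> = \<rho>0 then k else 0)"
  have "(\<Sum>\<rho>\<in>R. ?c \<rho> *\<^sub>R g \<rho>) = y + (\<Sum>\<rho>\<in>R. (if \<rho> = \<rho>0 then k else 0) *\<^sub>R g \<rho>)"
    by (simp add: scaleR_add_left sum.distrib c)
  also have "(\<Sum>\<rho>\<in>R. (if \<rho> = \<rho>0 then k else 0) *\<^sub>R g \<rho>) = (\<Sum>\<rho>\<in>R. if \<rho> = \<rho>0 then k *\<^sub>R g \<rho> else 0)"
    by (intro sum.cong) auto
  also have "\<dots> = k *\<^sub>R x" using assms(1) r0 by (simp add: sum.delta)
  finally show ?case by (intro exI[of _ ?c]) simp
qed

lemma cone_interior:
  fixes g :: "'r \<Rightarrow> 'a::euclidean_space"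
  assumes fR: "finite R" and sa: "subspace a" and ga: "g ` R \<subseteq> a" and aspan: "a \<subseteq> span (g ` R)"
    and Pdef: "P = {(\<Sum>\<rho>\<in>R. t \<rho> *\<^sub>R g \<rho>) | t. \<forall>\<rho>\<in>R. t \<rho> > 0}"
  shows "top_of_set a interior_of closure P = P"
proof -
  define C where "C = {(\<Sum>\<rho>\<in>R. t \<rho> *\<^sub>R g \<rho>) | t. \<forall>\<rho>\<in>R. t \<rho> \<ge> 0}"
  have PC: "P \<subseteq> C" unfolding Pdef C_def by (force simp: less_imp_le)
  have ccC: "convex_cone C"
    unfolding convex_cone_iff
  proof (intro conjI ballI allI impI)
    show "0 \<in> C" unfolding C_def by (rule CollectI, rule exI[of _ "\<lambda>_. 0"]) simp
    fix x y assume "x \<in> C" "y \<in> C"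
    then obtain t t' where "x = (\<Sum>\<rho>\<in>R. t \<rho> *\<^sub>R g \<rho>)" "\<forall>\<rho>\<in>R. t \<rho> \<ge> 0"
      "y = (\<Sum>\<rho>\<in>R. t' \<rho> *\<^sub>R g \<rho>)" "\<forall>\<rho>\<in>R. t' \<rho> \<ge> 0" unfolding C_def by blast
    then show "x + y \<in> C" unfolding C_def
      by (intro CollectI exI[of _ "\<lambda>\<rho>. t \<rho> + t' \<rho>"]) (simp add: scaleR_add_left sum.distrib)
  next
    fix x and k :: real assume "x \<in> C" "0 \<le> k"
    then obtain t where "x = (\<Sum>\<rho>\<in>R. t \<rho> *\<^sub>R g \<rho>)" "\<forall>\<rho>\<in>R. t \<rho> \<ge> 0" unfolding C_def by blast
    then show "k *\<^sub>R x \<in> C" using \<open>0 \<le> k\<close> unfolding C_def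
      by (intro CollectI exI[of _ "\<lambda>\<rho>. k * t \<rho>"]) (simp add: scaleR_sum_right)
  qed
  have CH: "C \<subseteq> convex_cone hull (g ` R)"
  proof
    fix x assume "x \<in> C"
    then obtain t where t: "x = (\<Sum>\<rho>\<in>R. t \<rho> *\<^sub>R g \<rho>)" "\<forall>\<rho>\<in>R. t \<rho> \<ge> 0" unfolding C_def by blast
    have "F \<subseteq> R \<Longrightarrow> (\<Sum>\<rho>\<in>F. t \<rho> *\<^sub>R g \<rho>) \<in> convex_cone hull (g ` R)" for F
      using finite_subset[OF _ fR, of F]
    proof (induction F rule: infinite_finite_induct)
      case (infinite F) then show ?case by blast
    next
      case empty then show ?case by (simp add: convex_cone_hull_contains_0)
    next
      case (insert \<rho> F)
      have "t \<rho> *\<^sub>R g \<rho> \<in> convex_cone hull (g ` R)"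
        using insert.prems t(2) by (intro convex_cone_hull_mul hull_inc) auto
      then show ?case using insert by (simp add: convex_cone_hull_add)
    qed
    then show "x \<in> convex_cone hull (g ` R)" using t(1) by blast
  qed
  have HC: "convex_cone hull (g ` R) \<subseteq> C"
  proof (rule hull_minimal[where S=convex_cone and t=C, OF _ ccC])
    show "g ` R \<subseteq> C"
    proof
      fix y assume "y \<in> g ` R"
      then obtain \<rho>0 where r0: "\<rho>0 \<in> R" "y = g \<rho>0" by blast
      have "(\<Sum>\<rho>\<in>R. (if \<rho> = \<rho>0 then 1 else 0) *\<^sub>R g \<rho>) = (\<Sum>\<rho>\<in>R. if \<rho> = \<rho>0 then g \<rho> else 0)"
        by (intro sum.cong) auto
      also have "\<dots> = y" using fR r0 by (simp add: sum.delta)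
      finally show "y \<in> C" unfolding C_def
        by (intro CollectI exI[of _ "\<lambda>\<rho>. if \<rho> = \<rho>0 then 1 else 0"]) auto
    qed
  qed
  have closedC: "closed C"
    using CH HC closed_convex_cone_hull[of "g ` R"] fR by (metis finite_imageI subset_antisym)
  have clP: "closure P \<subseteq> C" using PC closedC by (rule closure_minimal)
  define w where "w = (\<Sum>\<rho>\<in>R. g \<rho>)"
  have sum_in_a: "(\<Sum>\<rho>\<in>R. t \<rho> *\<^sub>R g \<rho>) \<in> a" for t
    by (rule subspace_sum[OF sa]) (use ga subspace_scale[OF sa] in blast)
  have wa: "w \<in> a" unfolding w_def by (rule subspace_sum[OF sa]) (use ga in blast)
  have Pa: "P \<subseteq> a" unfolding Pdef using sum_in_a by blast
  show ?thesis
  proof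
    show "top_of_set a interior_of closure P \<subseteq> P"
    proof
      fix x assume "x \<in> top_of_set a interior_of closure P"
      then obtain T where T: "openin (top_of_set a) T" "x \<in> T" "T \<subseteq> closure P"
        unfolding interior_of_def by blast
      then obtain e where e: "e > 0" "\<forall>x'\<in>a. dist x' x < e \<longrightarrow> x' \<in> T" and xa: "x \<in> a"
        unfolding openin_euclidean_subtopology_iff by blast
      define \<delta> where "\<delta> = e / (2 * (norm w + 1))"
      have twop: "2 * (norm w + 1) > 0" by (smt (verit) norm_ge_zero)
      have dpos: "\<delta> > 0" unfolding \<delta>_def by (rule divide_pos_pos[OF e(1) twop])
      have "\<delta> * norm w < e"
      proof -
        have "\<delta> * norm w \<le> \<delta> * (norm w + 1)" using dpos by simp
        also have "\<dots> = e / 2"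
        proof -
          have nz: "norm w + 1 \<noteq> 0" using twop by auto
          show ?thesis unfolding \<delta>_def using nz by (simp add: field_simps)
        qed
        finally show ?thesis using e(1) by simp
      qed
      moreover have "x - \<delta> *\<^sub>R w \<in> a" using xa wa sa by (simp add: subspace_diff subspace_scale)
      moreover have "dist (x - \<delta> *\<^sub>R w) x = \<delta> * norm w" using dpos by (simp add: dist_norm)
      ultimately have "x - \<delta> *\<^sub>R w \<in> T" using e(2) by auto
      then have "x - \<delta> *\<^sub>R w \<in> C" using T(3) clP by blast
      then obtain t where t: "x - \<delta> *\<^sub>R w = (\<Sum>\<rho>\<in>R. t \<rho> *\<^sub>R g \<rho>)" "\<forall>\<rho>\<in>R. t \<rho> \<ge> 0"
        unfolding C_def by blast
      have "x = (\<Sum>\<rho>\<in>R. (t \<rho> + \<delta>) *\<^sub>R g \<rho>)"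
        using t(1) by (simp add: scaleR_add_left sum.distrib w_def scaleR_sum_right algebra_simps)
      moreover have "\<forall>\<rho>\<in>R. t \<rho> + \<delta> > 0" using t(2) dpos by (simp add: add_nonneg_pos)
      ultimately show "x \<in> P" unfolding Pdef by (intro CollectI exI[of _ "\<lambda>\<rho>. t \<rho> + \<delta>"] conjI)
    qed
  next
    show "P \<subseteq> top_of_set a interior_of closure P"
    proof -
      have "openin (top_of_set a) P"
        unfolding openin_euclidean_subtopology_iff
      proof (intro conjI ballI Pa)
        fix x assume "x \<in> P"
        then obtain t where t: "x = (\<Sum>\<rho>\<in>R. t \<rho> *\<^sub>R g \<rho>)" "\<forall>\<rho>\<in>R. t \<rho> > 0" unfolding Pdef by blast
        show "\<exists>e>0. \<forall>x'\<in>a. dist x' x < e \<longrightarrow> x' \<in> P"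
        proof (cases "R = {}")
          case True
          then have "a \<subseteq> {0}" using aspan by simp
          moreover have "x = 0" using t(1) True by simp
          moreover have "0 \<in> P" unfolding Pdef using True by auto
          ultimately show ?thesis by (intro exI[of _ 1]) auto
        next
          case False
          define \<tau> where "\<tau> = Min (t ` R)"
          have tau: "\<tau> > 0" unfolding \<tau>_def using fR False t(2) by (subst Min_gr_iff) auto
          have taule: "\<tau> \<le> t \<rho>" if "\<rho> \<in> R" for \<rho> unfolding \<tau>_def using fR that by simp
          obtain E where E: "E \<subseteq> a" "pairwise orthogonal E" "\<And>x. x \<in> E \<Longrightarrow> norm x = 1"
              "independent E" "card E = dim a" "span E = a"
            using orthonormal_basis_subspace[OF sa] by blast
          have fE: "finite E" using E(4) by (rule independent_imp_finite)
          have "\<forall>e\<in>E. \<exists>c. e = (\<Sum>\<rho>\<in>R. c \<rho> *\<^sub>R g \<rho>)"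
            using span_image_sum[OF fR] E(1) aspan by blast
          then obtain c where c: "\<And>e. e \<in> E \<Longrightarrow> e = (\<Sum>\<rho>\<in>R. c e \<rho> *\<^sub>R g \<rho>)" by metis
          define K where "K = (\<Sum>e\<in>E. \<Sum>\<rho>\<in>R. \<bar>c e \<rho>\<bar>)"
          have K0: "K \<ge> 0" unfolding K_def by (intro sum_nonneg) auto
          define e0 where "e0 = \<tau> / (K + 1)"
          have e0: "e0 > 0" unfolding e0_def using tau K0 by simp
          have "\<forall>x'\<in>a. dist x' x < e0 \<longrightarrow> x' \<in> P"
          proof (intro ballI impI)
            fix x' assume x'a: "x' \<in> a" and dx: "dist x' x < e0"
            define z where "z = x' - x"
            have xa: "x \<in> a" using t(1) sum_in_a by simp
            have za: "z \<in> a" unfolding z_def by (rule subspace_diff[OF sa x'a xa])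
            have nz: "norm z < e0" using dx by (simp add: dist_norm z_def)
            define d where "d \<rho> = (\<Sum>e\<in>E. (z \<bullet> e) * c e \<rho>)" for \<rho>
            have zexp: "z = (\<Sum>\<rho>\<in>R. d \<rho> *\<^sub>R g \<rho>)"
            proof -
              have "z = (\<Sum>e\<in>E. (z \<bullet> e) *\<^sub>R e)"
                using orthonormal_basis_expand[OF E(2) E(3) _ fE, of z] za E(6) by simp
              also have "\<dots> = (\<Sum>e\<in>E. (z \<bullet> e) *\<^sub>R (\<Sum>\<rho>\<in>R. c e \<rho> *\<^sub>R g \<rho>))"
                using c by (intro sum.cong) auto
              also have "\<dots> = (\<Sum>\<rho>\<in>R. d \<rho> *\<^sub>R g \<rho>)"
                by (simp add: d_def scaleR_sum_right scaleR_sum_left sum.swap[of _ E R])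
              finally show ?thesis .
            qed
            have dbound: "\<bar>d \<rho>\<bar> \<le> norm z * K" if "\<rho> \<in> R" for \<rho>
            proof -
              have "\<bar>d \<rho>\<bar> \<le> (\<Sum>e\<in>E. \<bar>(z \<bullet> e) * c e \<rho>\<bar>)" unfolding d_def by (rule sum_abs)
              also have "\<dots> \<le> (\<Sum>e\<in>E. norm z * \<bar>c e \<rho>\<bar>)"
              proof (intro sum_mono)
                fix e assume "e \<in> E"
                have "\<bar>z \<bullet> e\<bar> \<le> norm z * norm e" by (rule Cauchy_Schwarz_ineq2)
                then have "\<bar>z \<bullet> e\<bar> \<le> norm z" using E(3)[OF \<open>e \<in> E\<close>] by simp
                then show "\<bar>(z \<bullet> e) * c e \<rho>\<bar> \<le> norm z * \<bar>c e \<rho>\<bar>"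
                  by (simp add: abs_mult mult_right_mono)
              qed
              also have "\<dots> = norm z * (\<Sum>e\<in>E. \<bar>c e \<rho>\<bar>)" by (simp add: sum_distrib_left)
              also have "\<dots> \<le> norm z * K"
              proof (rule mult_left_mono)
                show "(\<Sum>e\<in>E. \<bar>c e \<rho>\<bar>) \<le> K" unfolding K_def
                  by (intro sum_mono member_le_sum) (auto simp: fR that)
              qed simp
              finally show ?thesis .
            qed
            have "norm z * K < \<tau>"
            proof -
              have "norm z * K \<le> e0 * K" using nz K0 by (simp add: mult_right_mono)
              also have "e0 * K < \<tau>" unfolding e0_def using tau K0 by (simp add: field_simps)
              finally show ?thesis .
            qed
            then have pos: "\<forall>\<rho>\<in>R. t \<rho> + d \<rho> > 0"
              using dbound taule by (fastforce simp: abs_le_iff)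
            have "x' = (\<Sum>\<rho>\<in>R. (t \<rho> + d \<rho>) *\<^sub>R g \<rho>)"
              using t(1) zexp unfolding z_def by (simp add: scaleR_add_left sum.distrib algebra_simps)
            then show "x' \<in> P" unfolding Pdef using pos by (intro CollectI exI[of _ "\<lambda>\<rho>. t \<rho> + d \<rho>"] conjI)
          qed
          then show ?thesis using e0 by blast
        qed
      qed
      then show ?thesis unfolding interior_of_def using closure_subset by blast
    qed
  qed
qed



lemma finite_weights:
  fixes G :: "'i \<Rightarrow> 'a::euclidean_space \<Rightarrow> 'a"
  assumes lin: "\<And>i. i \<in> A \<Longrightarrow> linear (G i)"
    and wv: "\<And>\<rho>. \<rho> \<in> R \<Longrightarrow> \<exists>v. v \<noteq> 0 \<and> (\<forall>i\<in>A. G i v = \<rho> i *\<^sub>R v)"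
    and dist: "\<And>\<rho> \<sigma>. \<rho> \<in> R \<Longrightarrow> \<sigma> \<in> R \<Longrightarrow> \<rho> \<noteq> \<sigma> \<Longrightarrow> \<exists>i\<in>A. \<rho> i \<noteq> \<sigma> i"
  shows "finite R"
proof -
  have "card F \<le> DIM('a)" if F: "F \<subseteq> R" "finite F" for F
  proof -
    obtain v where v: "\<And>\<rho>. \<rho> \<in> F \<Longrightarrow> v \<rho> \<noteq> 0 \<and> (\<forall>i\<in>A. G i (v \<rho>) = \<rho> i *\<^sub>R v \<rho>)"
      using wv F(1) by (metis subsetD)
    have inj: "inj_on v F"
    proof (rule inj_onI)
      fix \<rho> \<sigma> assume rs: "\<rho> \<in> F" "\<sigma> \<in> F" "v \<rho> = v \<sigma>"
      show "\<rho> = \<sigma>"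
      proof (rule ccontr)
        assume "\<rho> \<noteq> \<sigma>"
        then obtain i where i: "i \<in> A" "\<rho> i \<noteq> \<sigma> i" using dist rs F(1) by blast
        have "\<rho> i *\<^sub>R v \<rho> = G i (v \<rho>)" using v[OF rs(1)] i(1) by simp
        also have "\<dots> = \<sigma> i *\<^sub>R v \<rho>" using v[OF rs(2)] i(1) rs(3) by simp
        finally show False using i(2) v[OF rs(1)] by (simp add: scaleR_cancel_right)
      qed
    qed
    have "independent (v ` F)"
    proof
      assume "dependent (v ` F)"
      then obtain u where u: "\<exists>w\<in>v ` F. u w \<noteq> 0" "(\<Sum>w\<in>v ` F. u w *\<^sub>R w) = 0"
        using dependent_finite[of "v ` F"] F(2) by blast
      have s0: "(\<Sum>\<rho>\<in>F. u (v \<rho>) *\<^sub>R v \<rho>) \<in> {0}" using u(2) by (simp add: sum.reindex[OF inj])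
      have "\<forall>\<rho>\<in>F. u (v \<rho>) *\<^sub>R v \<rho> \<in> {0}"
      proof (rule weight_components[where G=G and A=A, OF F(2) lin])
        show "subspace {0::'a}" by (rule subspace_single_0)
        show "\<And>i w. i \<in> A \<Longrightarrow> w \<in> {0} \<Longrightarrow> G i w \<in> {0}" using lin linear_0 by auto
        show "\<And>\<rho> \<sigma>. \<rho> \<in> F \<Longrightarrow> \<sigma> \<in> F \<Longrightarrow> \<rho> \<noteq> \<sigma> \<Longrightarrow> \<exists>i\<in>A. \<rho> i \<noteq> \<sigma> i"
          using dist F(1) by blast
        show "\<forall>\<rho>\<in>F. \<forall>i\<in>A. G i (u (v \<rho>) *\<^sub>R v \<rho>) = \<rho> i *\<^sub>R (u (v \<rho>) *\<^sub>R v \<rho>)"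
          using v lin by (simp add: linear_scale)
        show "(\<Sum>\<rho>\<in>F. u (v \<rho>) *\<^sub>R v \<rho>) \<in> {0}" by (rule s0)
      qed
      then show False using u(1) v by auto
    qed
    then have "card (v ` F) \<le> DIM('a)" using independent_bound by blast
    then show ?thesis using card_image[OF inj] by simp
  qed
  then show ?thesis using finite_if_finite_subsets_card_bdd by blast
qed

context stp begin

abbreviation "RR \<equiv> roots_on br a (unipotent_radical br p)"

lemma roots_finite: "finite RR"
proof (rule finite_weights[where G=br and A=a])
  show "\<And>i. i \<in> a \<Longrightarrow> linear (br i)" by (rule lin2)
  fix \<rho> assume "\<rho> \<in> RR"
  then obtain \<alpha> v where "\<rho> = restrict \<alpha> a" "v \<noteq> 0" "\<forall>s\<in>a. br s v = \<alpha> s *\<^sub>R v"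
    unfolding roots_on_def by blast
  then show "\<exists>v. v \<noteq> 0 \<and> (\<forall>i\<in>a. br i v = \<rho> i *\<^sub>R v)" by auto
next
  fix \<rho> \<sigma> assume r: "\<rho> \<in> RR" "\<sigma> \<in> RR" "\<rho> \<noteq> \<sigma>"
  obtain \<alpha> where \<alpha>: "\<rho> = restrict \<alpha> a" using r(1) unfolding roots_on_def by blast
  obtain \<beta> where \<beta>: "\<sigma> = restrict \<beta> a" using r(2) unfolding roots_on_def by blast
  show "\<exists>i\<in>a. \<rho> i \<noteq> \<sigma> i"
  proof (rule ccontr)
    assume "\<not> (\<exists>i\<in>a. \<rho> i \<noteq> \<sigma> i)"
    then have "\<rho> = \<sigma>" unfolding \<alpha> \<beta> by (auto simp: fun_eq_iff restrict_def)
    then show False using r(3) by simp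
  qed
qed

lemma root_dual:
  assumes "\<rho> \<in> RR"
  shows "dual_vec br a \<rho> \<in> a \<and> (\<forall>t\<in>a. killing br (dual_vec br a \<rho>) t = \<rho> t)"
proof -
  obtain \<alpha> where \<alpha>: "\<rho> = restrict \<alpha> a" "linear \<alpha>" using assms unfolding roots_on_def by blast
  then show ?thesis using dual_vec_prop[OF ss a_sub _ \<alpha>(2)] a_diag by auto
qed

lemma a_span: "a \<subseteq> span (dual_vec br a ` RR)"
proof -
  let ?g = "dual_vec br a"
  define Phi where "Phi z = (\<Sum>\<rho>\<in>RR. killing br (?g \<rho>) z *\<^sub>R ?g \<rho>)" for z
  have lPhi: "linear Phi"
    by (rule linearI) (simp_all add: Phi_def linear_add[OF killing_lin2] linear_scale[OF killing_lin2]
        scaleR_add_left sum.distrib scaleR_sum_right)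
  have Phi_span: "Phi z \<in> span (?g ` RR)" for z
    unfolding Phi_def by (intro span_sum span_scale span_base) blast
  have Phi_a: "Phi z \<in> a" for z
    unfolding Phi_def by (rule subspace_sum[OF a_sub]) (use root_dual subspace_scale[OF a_sub] in blast)
  have inj: "inj_on Phi a"
  proof (rule inj_onI)
    fix s s' assume ss': "s \<in> a" "s' \<in> a" "Phi s = Phi s'"
    define z where "z = s - s'"
    have za: "z \<in> a" unfolding z_def by (rule subspace_diff[OF a_sub ss'(1,2)])
    have "Phi z = 0" unfolding z_def using ss'(3) by (simp add: linear_diff[OF lPhi])
    then have "killing br (Phi z) z = 0" using linear_0[OF killing_lin1] by simp
    moreover have "killing br (Phi z) z = (\<Sum>\<rho>\<in>RR. (killing br (?g \<rho>) z)\<^sup>2)"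
      unfolding Phi_def
      by (simp add: linear_sum[OF killing_lin1] linear_scale[OF killing_lin1] power2_eq_square)
    ultimately have "\<forall>\<rho>\<in>RR. (killing br (?g \<rho>) z)\<^sup>2 = 0"
      using sum_nonneg_eq_0_iff[OF roots_finite, of "\<lambda>\<rho>. (killing br (?g \<rho>) z)\<^sup>2"] by simp
    then have "\<forall>\<rho>\<in>RR. \<rho> z = 0" using root_dual za by simp
    then have "z = 0" using roots_zero_imp_zero[OF za] by blast
    then show "s = s'" by (simp add: z_def)
  qed
  have "dim (Phi ` a) = dim a"
    by (rule dim_image_eq[OF lPhi]) (use inj a_sub in \<open>simp add: span_eq_iff[THEN iffD2]\<close>)
  then have Meq: "Phi ` a = a"
    by (intro subspace_dim_equal linear_subspace_image[OF lPhi a_sub] a_sub) (use Phi_a in auto)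
  show ?thesis
  proof
    fix x assume "x \<in> a"
    then obtain z where "x = Phi z" using Meq by (metis image_iff)
    then show "x \<in> span (?g ` RR)" using Phi_span by simp
  qed
qed

lemma main_result:
  "(top_of_set a) interior_of (closure (pos_cone br a (unipotent_radical br p)))
           = pos_cone br a (unipotent_radical br p)"
proof (rule cone_interior[OF roots_finite a_sub _ a_span])
  show "dual_vec br a ` RR \<subseteq> a" using root_dual by blast
  show "pos_cone br a (unipotent_radical br p) =
    {\<Sum>\<rho>\<in>RR. t \<rho> *\<^sub>R dual_vec br a \<rho> |t. \<forall>\<rho>\<in>RR. 0 < t \<rho>}"
    by (simp add: pos_cone_def)
qed

end

theorem lemma2p2:
  fixes br :: "'a::euclidean_space \<Rightarrow> 'a \<Rightarrow> 'a" and p a :: "'a set"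
  assumes "semisimple br" and "no_compact_factors br"
    and "parabolic_subalgebra br p" and "absolutely_proper br p"
    and "maximal_split_toral_in br p a"
  shows "(top_of_set a) interior_of (closure (pos_cone br a (unipotent_radical br p)))
           = pos_cone br a (unipotent_radical br p)"
proof -
  obtain X where X: "real_diagonalizable (br X)" "p = span {v. \<exists>c\<ge>0. br X v = c *\<^sub>R v}"
    using assms(3) unfolding parabolic_subalgebra_def by blast
  have la: "lie_algebra br" using assms(1) by (simp add: semisimple_def)
  interpret stp br X p a
    by (unfold_locales) (use la X assms in auto)
  show ?thesis by (rule main_result)
qed



end
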